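(* Let $G$ be a group, $N$ a normal subgroup and $c\in\mathrm{C}_1(G;\mathbb{Z})$. The following are equivalent: (i) there exist $k,l\in\mathbb{Z}_{\ge0}$ and $x_1,\dots,x_k,\check x_1,\dots,\check x_l\in N$ with $c=x_1+\cdots+x_k-\check x_1-\cdots-\check x_l$ and $x_1\cdots x_k\check x_1^{-1}\cdots\check x_l^{-1}\in[G,N]$; (ii) $c\in\mathcal{C}_{\mathbb{Z}}(G,N)$.
   Context: $[G,N]$ is the subgroup generated by $[g,x]=gxg^{-1}x^{-1}$, $g\in G$, $x\in N$. $\mathrm{C}_1(G;A)$ is the free $A$-module on $G$, $\mathrm{C}_2(G;A)$ the free $A$-module on $G\times G$, $\partial(g_1,g_2)=g_2-g_1g_2+g_1$. $\mathrm{C}'_2(G,N;A)$ is the submodule generated by pairs $(g_1,g_2)$ with $g_1\in N$ or $g_2\in N$; $\mathrm{B}'_1(G,N;A)=\partial\,\mathrm{C}'_2(G,N;A)$; $\mathcal{C}_A(G,N)=\mathrm{C}_1(N;A)\cap\mathrm{B}'_1(G,N;A)$. *)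

theory Defs
  imports "HOL-Algebra.Algebra"
begin

definition supp :: "('b \<Rightarrow> int) \<Rightarrow> 'b set" where
  "supp c = {x. c x \<noteq> 0}"

text \<open>C_1(S; Z): free Z-module on a set S, as finitely supported functions S -> Z.\<close>
definition chains1 :: "'a set \<Rightarrow> ('a \<Rightarrow> int) set" where
  "chains1 S = {c. finite (supp c) \<and> supp c \<subseteq> S}"

definition chains2 :: "('a, 'b) monoid_scheme \<Rightarrow> ('a \<times> 'a \<Rightarrow> int) set" where
  "chains2 G = {c. finite (supp c) \<and> supp c \<subseteq> carrier G \<times> carrier G}"

text \<open>C'_2(G,N; Z): submodule generated by pairs (g1,g2) with g1 in N or g2 in N.\<close>
definition rel_chains2 :: "('a, 'b) monoid_scheme \<Rightarrow> 'a set \<Rightarrow> ('a \<times> 'a \<Rightarrow> int) set" where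
  "rel_chains2 G N = {c. c \<in> chains2 G \<and>
      supp c \<subseteq> {(g1, g2). g1 \<in> N \<or> g2 \<in> N}}"

definition basis1 :: "'a \<Rightarrow> 'a \<Rightarrow> int" where
  "basis1 g = (\<lambda>x. if x = g then 1 else 0)"

definition bdry2 :: "('a, 'b) monoid_scheme \<Rightarrow> ('a \<times> 'a \<Rightarrow> int) \<Rightarrow> 'a \<Rightarrow> int" where
  "bdry2 G c = (\<lambda>x. \<Sum>p\<in>supp c. c p *
      (basis1 (snd p) x - basis1 (fst p \<otimes>\<^bsub>G\<^esub> snd p) x + basis1 (fst p) x))"

definition rel_bdries1 :: "('a, 'b) monoid_scheme \<Rightarrow> 'a set \<Rightarrow> ('a \<Rightarrow> int) set" where
  "rel_bdries1 G N = bdry2 G ` rel_chains2 G N"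

definition calC :: "('a, 'b) monoid_scheme \<Rightarrow> 'a set \<Rightarrow> ('a \<Rightarrow> int) set" where
  "calC G N = chains1 N \<inter> rel_bdries1 G N"

definition comm_subgroup :: "('a, 'b) monoid_scheme \<Rightarrow> 'a set \<Rightarrow> 'a set" where
  "comm_subgroup G N = generate G
     {g \<otimes>\<^bsub>G\<^esub> x \<otimes>\<^bsub>G\<^esub> inv\<^bsub>G\<^esub> g \<otimes>\<^bsub>G\<^esub> inv\<^bsub>G\<^esub> x | g x. g \<in> carrier G \<and> x \<in> N}"

definition list_prod :: "('a, 'b) monoid_scheme \<Rightarrow> 'a list \<Rightarrow> 'a" where
  "list_prod G xs = foldr (\<lambda>x acc. x \<otimes>\<^bsub>G\<^esub> acc) xs \<one>\<^bsub>G\<^esub>"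

definition list_chain :: "'a list \<Rightarrow> 'a \<Rightarrow> int" where
  "list_chain xs = (\<lambda>g. int (count_list xs g))"

end

theory Submission
  imports Defs "HOL-Library.Function_Algebras"
begin


definition fpair :: "('a, 'b) monoid_scheme \<Rightarrow> 'a \<times> 'a \<Rightarrow> 'a \<Rightarrow> int" where
  "fpair G p = basis1 (snd p) - basis1 (fst p \<otimes>\<^bsub>G\<^esub> snd p) + basis1 (fst p)"

lemma bdry2_superset:
  assumes "finite S" "supp c \<subseteq> S"
  shows "bdry2 G c x = (\<Sum>p\<in>S. c p * fpair G p x)"
proof -
  have "bdry2 G c x = (\<Sum>p\<in>supp c. c p * fpair G p x)"
    unfolding bdry2_def fpair_def by simp
  also have "\<dots> = (\<Sum>p\<in>S. c p * fpair G p x)"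
    by (rule sum.mono_neutral_left) (use assms in \<open>auto simp: supp_def\<close>)
  finally show ?thesis .
qed

lemma supp_add: "supp (c + d) \<subseteq> supp c \<union> supp d"
  by (auto simp: supp_def)

lemma supp_uminus[simp]: "supp (- c) = supp c"
  by (auto simp: supp_def)

lemma supp_zero[simp]: "supp 0 = {}"
  by (auto simp: supp_def)

lemma supp_basis1[simp]: "supp (basis1 p) = {p}"
  by (auto simp: supp_def basis1_def)

lemma bdry2_add:
  assumes "finite (supp c)" "finite (supp d)"
  shows "bdry2 G (c + d) = bdry2 G c + bdry2 G d"
proof
  fix x
  let ?S = "supp c \<union> supp d"
  have "bdry2 G (c + d) x = (\<Sum>p\<in>?S. (c + d) p * fpair G p x)"
    using assms supp_add[of c d] by (intro bdry2_superset) auto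
  also have "\<dots> = (\<Sum>p\<in>?S. c p * fpair G p x) + (\<Sum>p\<in>?S. d p * fpair G p x)"
    by (simp add: distrib_right sum.distrib)
  also have "\<dots> = bdry2 G c x + bdry2 G d x"
  proof -
    have "bdry2 G c x = (\<Sum>p\<in>?S. c p * fpair G p x)" by (rule bdry2_superset) (use assms in auto)
    moreover have "bdry2 G d x = (\<Sum>p\<in>?S. d p * fpair G p x)" by (rule bdry2_superset) (use assms in auto)
    ultimately show ?thesis by simp
  qed
  finally show "bdry2 G (c + d) x = (bdry2 G c + bdry2 G d) x" by simp
qed

lemma bdry2_uminus: "bdry2 G (- c) = - bdry2 G c"
  by (rule ext) (simp add: bdry2_def sum_negf)

lemma bdry2_zero: "bdry2 G 0 = 0"
  by (rule ext) (simp add: bdry2_def)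

lemma bdry2_single: "bdry2 G (basis1 p) = fpair G p"
proof
  fix x
  have "bdry2 G (basis1 p) x = (\<Sum>q\<in>{p}. basis1 p q * fpair G q x)"
    by (rule bdry2_superset) auto
  then show "bdry2 G (basis1 p) x = fpair G p x" by (simp add: basis1_def)
qed

lemma rel_chains2_add: "c \<in> rel_chains2 G N \<Longrightarrow> d \<in> rel_chains2 G N \<Longrightarrow> c + d \<in> rel_chains2 G N"
  unfolding rel_chains2_def chains2_def using supp_add[of c d]
  by (auto intro: finite_subset)

lemma rel_chains2_uminus: "c \<in> rel_chains2 G N \<Longrightarrow> - c \<in> rel_chains2 G N"
  unfolding rel_chains2_def chains2_def by auto

lemma rel_chains2_zero: "0 \<in> rel_chains2 G N"
  unfolding rel_chains2_def chains2_def by auto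

lemma rel_chains2_single: "a \<in> carrier G \<Longrightarrow> b \<in> carrier G \<Longrightarrow> a \<in> N \<or> b \<in> N \<Longrightarrow> basis1 (a, b) \<in> rel_chains2 G N"
  unfolding rel_chains2_def chains2_def by auto

lemma rel_chains2_finite: "c \<in> rel_chains2 G N \<Longrightarrow> finite (supp c)"
  unfolding rel_chains2_def chains2_def by auto

lemma B_add: "u \<in> rel_bdries1 G N \<Longrightarrow> v \<in> rel_bdries1 G N \<Longrightarrow> u + v \<in> rel_bdries1 G N"
  unfolding rel_bdries1_def
  by (auto simp: bdry2_add[symmetric] rel_chains2_finite intro!: imageI rel_chains2_add)

lemma B_uminus: "u \<in> rel_bdries1 G N \<Longrightarrow> - u \<in> rel_bdries1 G N"
  unfolding rel_bdries1_def
  by (auto simp: bdry2_uminus[symmetric] intro!: imageI rel_chains2_uminus)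

lemma B_zero: "0 \<in> rel_bdries1 G N"
  unfolding rel_bdries1_def using bdry2_zero rel_chains2_zero
  by (metis image_eqI)

lemma B_diff: "u \<in> rel_bdries1 G N \<Longrightarrow> v \<in> rel_bdries1 G N \<Longrightarrow> u - v \<in> rel_bdries1 G N"
  using B_add B_uminus by (metis diff_conv_add_uminus)

lemma B_pair: "a \<in> carrier G \<Longrightarrow> b \<in> carrier G \<Longrightarrow> a \<in> N \<or> b \<in> N \<Longrightarrow>
   basis1 b - basis1 (a \<otimes>\<^bsub>G\<^esub> b) + basis1 a \<in> rel_bdries1 G N"
  unfolding rel_bdries1_def using bdry2_single[of G "(a,b)"] rel_chains2_single[of a G b N]
  by (metis fpair_def fst_conv snd_conv image_eqI)

lemma lc_Nil: "list_chain [] = 0"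
  by (auto simp: list_chain_def)

lemma lc_Cons: "list_chain (x # xs) = basis1 x + list_chain xs"
  by (auto simp: list_chain_def basis1_def)

lemma lc_append: "list_chain (xs @ ys) = list_chain xs + list_chain ys"
  by (auto simp: list_chain_def)

lemma lp_Nil: "list_prod G [] = \<one>\<^bsub>G\<^esub>"
  by (simp add: list_prod_def)

lemma lp_Cons: "list_prod G (x # xs) = x \<otimes>\<^bsub>G\<^esub> list_prod G xs"
  by (simp add: list_prod_def)

lemma (in group) lp_closed: "set xs \<subseteq> carrier G \<Longrightarrow> list_prod G xs \<in> carrier G"
  by (induction xs) (auto simp: lp_Nil lp_Cons)

lemma (in group) lp_append: "set xs \<subseteq> carrier G \<Longrightarrow> set ys \<subseteq> carrier G \<Longrightarrow>
  list_prod G (xs @ ys) = list_prod G xs \<otimes> list_prod G ys"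
  by (induction xs) (auto simp: lp_Nil lp_Cons lp_closed m_assoc)

context normal
begin

lemma B_one: "basis1 \<one> \<in> rel_bdries1 G H"
  using B_pair[of "\<one>" G "\<one>" H] by (simp add: one_closed)

lemma B_prod: "set xs \<subseteq> H \<Longrightarrow> list_chain xs - basis1 (list_prod G xs) \<in> rel_bdries1 G H"
proof (induction xs)
  case Nil
  then show ?case using B_uminus[OF B_one] by (metis lc_Nil lp_Nil diff_0)
next
  case (Cons x xs)
  have x: "x \<in> H" "x \<in> carrier G" and xs: "set xs \<subseteq> H" using Cons.prems by auto
  have p: "list_prod G xs \<in> carrier G" by (meson lp_closed order_trans subset xs)
  have eq: "list_chain (x # xs) - basis1 (list_prod G (x # xs)) =
     (list_chain xs - basis1 (list_prod G xs)) +
     (basis1 (list_prod G xs) - basis1 (x \<otimes> list_prod G xs) + basis1 x)"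
    by (simp add: lc_Cons lp_Cons algebra_simps)
  show ?case unfolding eq using x p by (intro B_add Cons.IH[OF xs] B_pair) auto
qed

lemma B_inv: "y \<in> H \<Longrightarrow> basis1 y + basis1 (inv y) \<in> rel_bdries1 G H"
proof -
  assume y: "y \<in> H"
  hence yc: "y \<in> carrier G" by auto
  have "basis1 y + basis1 (inv y) = (basis1 (inv y) - basis1 (y \<otimes> inv y) + basis1 y) + basis1 \<one>"
    using yc by simp
  then show ?thesis using B_add[OF B_pair[OF yc inv_closed[OF yc]] B_one] y by (simp add: add.commute)
qed

lemma B_invs: "set ys \<subseteq> H \<Longrightarrow> list_chain ys + list_chain (map (\<lambda>y. inv y) ys) \<in> rel_bdries1 G H"
proof (induction ys)
  case Nil
  then show ?case using B_zero by (metis lc_Nil list.map(1) add_0)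
next
  case (Cons y ys)
  have eq: "list_chain (y # ys) + list_chain (map (\<lambda>y. inv y) (y # ys)) =
      (list_chain ys + list_chain (map (\<lambda>y. inv y) ys)) + (basis1 y + basis1 (inv y))"
    by (simp add: lc_Cons algebra_simps)
  show ?case unfolding eq using Cons.prems by (intro B_add Cons.IH B_inv) auto
qed

lemma B_gen: "h \<in> {g \<otimes> x \<otimes> inv g \<otimes> inv x |g x. g \<in> carrier G \<and> x \<in> H} \<Longrightarrow> h \<in> H \<and> basis1 h \<in> rel_bdries1 G H"
proof -
  assume "h \<in> {g \<otimes> x \<otimes> inv g \<otimes> inv x |g x. g \<in> carrier G \<and> x \<in> H}"
  then obtain g x where h: "h = g \<otimes> x \<otimes> inv g \<otimes> inv x" and g: "g \<in> carrier G" and x: "x \<in> H"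
    by blast
  have xc: "x \<in> carrier G" using x by auto
  define a where "a = g \<otimes> x \<otimes> inv g"
  have a: "a \<in> H" using inv_op_closed2[OF g x] a_def by simp
  have ac: "a \<in> carrier G" using a by auto
  have hN: "h \<in> H" using h a x a_def by simp
  have ag: "a \<otimes> g = g \<otimes> x" using g xc by (simp add: a_def m_assoc)
  have h': "h = a \<otimes> inv x" using h a_def by simp
  have "basis1 h = ((basis1 x + basis1 (inv x))
        - ((basis1 x - basis1 (g \<otimes> x) + basis1 g) - (basis1 g - basis1 (a \<otimes> g) + basis1 a)))
        - (basis1 (inv x) - basis1 (a \<otimes> inv x) + basis1 a)"
    using ag h' by (simp add: algebra_simps)
  moreover have "basis1 (inv x) - basis1 (a \<otimes> inv x) + basis1 a \<in> rel_bdries1 G H"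
    using B_pair[OF ac inv_closed[OF xc]] a by simp
  moreover have "basis1 x - basis1 (g \<otimes> x) + basis1 g \<in> rel_bdries1 G H"
    using B_pair[OF g xc] x by simp
  moreover have "basis1 g - basis1 (a \<otimes> g) + basis1 a \<in> rel_bdries1 G H"
    using B_pair[OF ac g] a by simp
  ultimately have "basis1 h \<in> rel_bdries1 G H"
    using B_inv[OF x] by (metis B_diff)
  then show ?thesis using hN by simp
qed

lemma B_K: "z \<in> comm_subgroup G H \<Longrightarrow> z \<in> H \<and> basis1 z \<in> rel_bdries1 G H"
  unfolding comm_subgroup_def
proof (induction z rule: generate.induct)
  case one
  then show ?case using B_one by simp
next
  case (incl h)
  then show ?case by (rule B_gen)
next
  case (inv h)
  note hg = this
  have h: "h \<in> H" "basis1 h \<in> rel_bdries1 G H" using B_gen[OF hg] by auto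
  have eq: "basis1 (inv h) = (basis1 h + basis1 (inv h)) - basis1 h" by simp
  have "inv h \<in> H" using h(1) by (rule m_inv_closed)
  moreover have "basis1 (inv h) \<in> rel_bdries1 G H"
    using B_diff[OF B_inv[OF h(1)] h(2)] unfolding eq[symmetric] .
  ultimately show ?case by simp
next
  case (eng h1 h2)
  then have h: "h1 \<in> H" "h2 \<in> H" "basis1 h1 \<in> rel_bdries1 G H" "basis1 h2 \<in> rel_bdries1 G H"
    by auto
  then have c: "h1 \<in> carrier G" "h2 \<in> carrier G" by auto
  have eq: "basis1 (h1 \<otimes> h2) = (basis1 h1 + basis1 h2) - (basis1 h2 - basis1 (h1 \<otimes> h2) + basis1 h1)"
    by (simp add: algebra_simps)
  have "h1 \<otimes> h2 \<in> H" using h(1,2) by (rule subgroup.m_closed[OF subgroup_axioms])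
  moreover have "basis1 (h1 \<otimes> h2) \<in> rel_bdries1 G H"
  proof -
    have "(basis1 h1 + basis1 h2) - (basis1 h2 - basis1 (h1 \<otimes> h2) + basis1 h1) \<in> rel_bdries1 G H"
      using h c by (intro B_diff B_add B_pair) auto
    then show ?thesis unfolding eq[symmetric] .
  qed
  ultimately show ?case by simp
qed

end


definition Psi :: "('c, 'd) monoid_scheme \<Rightarrow> ('a \<Rightarrow> 'c) \<Rightarrow> ('a \<Rightarrow> int) \<Rightarrow> 'c" where
  "Psi A f u = finprod A (\<lambda>g. f g [^]\<^bsub>A\<^esub> u g) (supp u)"

lemma sum_fun_app: "(\<Sum>p\<in>S. F p) x = (\<Sum>p\<in>S. F p x)"
  by (induction S rule: infinite_finite_induct) auto

lemma count_replicate: "count_list (replicate n a) g = (if g = a then n else 0)"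
  by (induction n) auto

lemma supp_lc: "supp (list_chain xs) \<subseteq> set xs"
  by (auto simp: supp_def list_chain_def count_list_0_iff)

lemma decomp_aux:
  assumes "finite F" 
  shows "supp c \<subseteq> F \<Longrightarrow> \<exists>xs ys. set xs \<subseteq> supp c \<and> set ys \<subseteq> supp c \<and> c = list_chain xs - list_chain ys"
  using assms
proof (induction F arbitrary: c rule: finite_induct)
  case empty
  then have "c = 0" by (auto simp: supp_def)
  then show ?case by (intro exI[of _ "[]"]) (auto simp: lc_Nil)
next
  case (insert a F)
  define c' where "c' = c(a := 0)"
  have "supp c' \<subseteq> F" using insert.prems by (auto simp: c'_def supp_def)
  then obtain xs ys where xs: "set xs \<subseteq> supp c'" "set ys \<subseteq> supp c'" "c' = list_chain xs - list_chain ys"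
    using insert.IH by blast
  have sc: "supp c' \<subseteq> supp c" by (auto simp: c'_def supp_def)
  define xs' where "xs' = replicate (nat (c a)) a @ xs"
  define ys' where "ys' = replicate (nat (- c a)) a @ ys"
  have "set xs' \<subseteq> supp c"
    using xs(1) sc by (auto simp: xs'_def supp_def)
  moreover have "set ys' \<subseteq> supp c"
    using xs(2) sc by (auto simp: ys'_def supp_def)
  moreover have "c = list_chain xs' - list_chain ys'"
  proof
    fix g
    have "c' g = list_chain xs g - list_chain ys g" using xs(3) by simp
    then show "c g = (list_chain xs' - list_chain ys') g"
      by (cases "g = a") (auto simp: xs'_def ys'_def list_chain_def count_replicate c'_def)
  qed
  ultimately show ?case by blast
qed

lemma decomp:
  assumes "finite (supp c)" "supp c \<subseteq> N"
  shows "\<exists>xs ys. set xs \<subseteq> N \<and> set ys \<subseteq> N \<and> c = list_chain xs - list_chain ys"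
  using decomp_aux[OF assms(1) order_refl] assms(2) by blast

context comm_group
begin

lemma Psi_superset:
  assumes "f \<in> UNIV \<rightarrow> carrier G" "finite S" "supp u \<subseteq> S"
  shows "Psi G f u = (\<Otimes>g\<in>S. f g [^] u g)"
  unfolding Psi_def
  by (rule finprod_mono_neutral_cong_left) (use assms in \<open>auto simp: supp_def\<close>)

lemma Psi_closed: "f \<in> UNIV \<rightarrow> carrier G \<Longrightarrow> Psi G f u \<in> carrier G"
  unfolding Psi_def by (rule finprod_closed) auto

lemma Psi_add:
  assumes f: "f \<in> UNIV \<rightarrow> carrier G" and "finite (supp u)" "finite (supp v)"
  shows "Psi G f (u + v) = Psi G f u \<otimes> Psi G f v"
proof -
  let ?S = "supp u \<union> supp v"
  have fin: "finite ?S" using assms by auto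
  have "Psi G f (u + v) = (\<Otimes>g\<in>?S. f g [^] (u g + v g))"
    using Psi_superset[OF f fin, of "u + v"] supp_add[of u v] by simp
  also have "\<dots> = (\<Otimes>g\<in>?S. f g [^] u g \<otimes> f g [^] v g)"
  proof -
    have fi: "\<And>i. f i \<in> carrier G" using f by auto
    show ?thesis by (intro finprod_cong') (auto simp: int_pow_mult[OF fi] fi)
  qed
  also have "\<dots> = (\<Otimes>g\<in>?S. f g [^] u g) \<otimes> (\<Otimes>g\<in>?S. f g [^] v g)"
    using f by (intro finprod_multf) auto
  also have "\<dots> = Psi G f u \<otimes> Psi G f v"
    using Psi_superset[OF f fin, of u] Psi_superset[OF f fin, of v] by simp
  finally show ?thesis .
qed

lemma Psi_zero: "Psi G f 0 = \<one>"
  unfolding Psi_def by simp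

lemma Psi_uminus:
  assumes f: "f \<in> UNIV \<rightarrow> carrier G" and fin: "finite (supp u)"
  shows "Psi G f (- u) = inv (Psi G f u)"
proof -
  have "Psi G f u \<otimes> Psi G f (- u) = \<one>"
    using Psi_add[OF f fin, of "- u"] fin Psi_zero by (metis supp_uminus add.right_inverse)
  then have "Psi G f (- u) \<otimes> Psi G f u = \<one>" using Psi_closed[OF f] m_comm by metis
  then show ?thesis using Psi_closed[OF f] by (intro inv_equality[symmetric]) auto
qed

lemma Psi_basis1:
  assumes f: "f \<in> UNIV \<rightarrow> carrier G"
  shows "Psi G f (basis1 g) = f g"
proof -
  have "f g \<in> carrier G" using f by auto
  then show ?thesis unfolding Psi_def supp_basis1 by (simp add: basis1_def)
qed

end



definition AQ :: "('a, 'b) monoid_scheme \<Rightarrow> 'a set \<Rightarrow> 'a set monoid" where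
  "AQ G H = \<lparr>carrier = (\<lambda>n. comm_subgroup G H #>\<^bsub>G\<^esub> n) ` H, monoid.mult = set_mult G, one = comm_subgroup G H\<rparr>"

definition sN :: "('a, 'b) monoid_scheme \<Rightarrow> 'a set \<Rightarrow> 'a" where
  "sN G C = (if \<one>\<^bsub>G\<^esub> \<in> C then \<one>\<^bsub>G\<^esub> else (SOME r. r \<in> C))"

definition psi :: "('a, 'b) monoid_scheme \<Rightarrow> 'a set \<Rightarrow> 'a \<Rightarrow> 'a" where
  "psi G H g = g \<otimes>\<^bsub>G\<^esub> inv\<^bsub>G\<^esub> (sN G (H #>\<^bsub>G\<^esub> g))"

definition phi :: "('a, 'b) monoid_scheme \<Rightarrow> 'a set \<Rightarrow> 'a \<Rightarrow> 'a set" where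
  "phi G H g = (if g \<in> carrier G then comm_subgroup G H #>\<^bsub>G\<^esub> psi G H g else comm_subgroup G H)"

context normal
begin

abbreviation "KS \<equiv> comm_subgroup G H"

lemma gens_sub: "{g \<otimes> x \<otimes> inv g \<otimes> inv x |g x. g \<in> carrier G \<and> x \<in> H} \<subseteq> carrier G"
  using B_gen subset by blast

lemma KS_subgroup: "subgroup KS G"
  unfolding comm_subgroup_def by (rule generate_is_subgroup[OF gens_sub])

lemma KS_sub: "KS \<subseteq> H"
  using B_K by blast

lemma KS_carrier: "KS \<subseteq> carrier G"
  using KS_sub subset by blast

lemma gen_in_KS: "g \<in> carrier G \<Longrightarrow> x \<in> H \<Longrightarrow> g \<otimes> x \<otimes> inv g \<otimes> inv x \<in> KS"
  unfolding comm_subgroup_def by (rule generate.incl) blast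

lemma KS_normal: "KS \<lhd> G"
proof (rule normal_invI[OF KS_subgroup])
  fix x h assume x: "x \<in> carrier G" and h: "h \<in> KS"
  have hH: "h \<in> H" using h KS_sub by blast
  have hc: "h \<in> carrier G" using hH subset by blast
  have "x \<otimes> h \<otimes> inv x = (x \<otimes> h \<otimes> inv x \<otimes> inv h) \<otimes> h"
    using x hc by (simp add: m_assoc)
  moreover have "x \<otimes> h \<otimes> inv x \<otimes> inv h \<in> KS" using gen_in_KS[OF x hH] .
  ultimately show "x \<otimes> h \<otimes> inv x \<in> KS"
    using h subgroup.m_closed[OF KS_subgroup] by metis
qed

lemma cos_mult: "a \<in> carrier G \<Longrightarrow> b \<in> carrier G \<Longrightarrow> (KS #> a) <#> (KS #> b) = KS #> (a \<otimes> b)"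
  by (rule normal.rcos_sum[OF KS_normal])

lemma cos_eq: "a \<in> carrier G \<Longrightarrow> b \<in> carrier G \<Longrightarrow> a \<otimes> inv b \<in> KS \<Longrightarrow> KS #> a = KS #> b"
proof -
  assume a: "a \<in> carrier G" and b: "b \<in> carrier G" and k: "a \<otimes> inv b \<in> KS"
  have "a = (a \<otimes> inv b) \<otimes> b" using a b by (simp add: m_assoc)
  then have "a \<in> KS #> b" using rcosI[OF k KS_carrier b] by simp
  then show ?thesis using repr_independence[OF _ b KS_subgroup] by simp
qed

lemma cos_comm: "a \<in> carrier G \<Longrightarrow> b \<in> H \<Longrightarrow> KS #> (a \<otimes> b) = KS #> (b \<otimes> a)"
proof -
  assume a: "a \<in> carrier G" and b: "b \<in> H"
  have bc: "b \<in> carrier G" using b subset by blast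
  have "(a \<otimes> b) \<otimes> inv (b \<otimes> a) = a \<otimes> b \<otimes> inv a \<otimes> inv b"
    using a bc by (simp add: inv_mult_group m_assoc)
  then show ?thesis using cos_eq gen_in_KS[OF a b] a bc by simp
qed

lemma cos_conj: "g \<in> carrier G \<Longrightarrow> x \<in> H \<Longrightarrow> KS #> (g \<otimes> x \<otimes> inv g) = KS #> x"
proof -
  assume g: "g \<in> carrier G" and x: "x \<in> H"
  have xc: "x \<in> carrier G" using x subset by blast
  show ?thesis using cos_eq gen_in_KS[OF g x] g xc by simp
qed

lemma cos_one: "KS #> \<one> = KS"
  using KS_carrier by simp

lemma AQ_carrier: "carrier (AQ G H) = (\<lambda>n. KS #> n) ` H"
  by (simp add: AQ_def)

lemma AQ_one: "\<one>\<^bsub>AQ G H\<^esub> = KS"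
  by (simp add: AQ_def)

lemma AQ_mult: "a \<in> carrier G \<Longrightarrow> b \<in> carrier G \<Longrightarrow> (KS #> a) \<otimes>\<^bsub>AQ G H\<^esub> (KS #> b) = KS #> (a \<otimes> b)"
  by (simp add: AQ_def cos_mult)

lemma AQ_comm: "comm_group (AQ G H)"
proof (rule comm_groupI)
  fix x y assume "x \<in> carrier (AQ G H)" "y \<in> carrier (AQ G H)"
  then obtain a b where ab: "a \<in> H" "b \<in> H" "x = KS #> a" "y = KS #> b" by (auto simp: AQ_carrier)
  have c: "a \<in> carrier G" "b \<in> carrier G" using ab subset by auto
  show "x \<otimes>\<^bsub>AQ G H\<^esub> y \<in> carrier (AQ G H)"
    using ab c by (auto simp: AQ_mult AQ_carrier)
  show "x \<otimes>\<^bsub>AQ G H\<^esub> y = y \<otimes>\<^bsub>AQ G H\<^esub> x"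
    using ab c by (simp add: AQ_mult cos_comm)
next
  show "\<one>\<^bsub>AQ G H\<^esub> \<in> carrier (AQ G H)"
    using cos_one by (auto simp: AQ_one AQ_carrier intro!: image_eqI[of _ _ \<one>])
next
  fix x y z assume "x \<in> carrier (AQ G H)" "y \<in> carrier (AQ G H)" "z \<in> carrier (AQ G H)"
  then obtain a b d where ab: "a \<in> H" "b \<in> H" "d \<in> H" "x = KS #> a" "y = KS #> b" "z = KS #> d"
    by (auto simp: AQ_carrier)
  have c: "a \<in> carrier G" "b \<in> carrier G" "d \<in> carrier G" using ab subset by auto
  show "x \<otimes>\<^bsub>AQ G H\<^esub> y \<otimes>\<^bsub>AQ G H\<^esub> z = x \<otimes>\<^bsub>AQ G H\<^esub> (y \<otimes>\<^bsub>AQ G H\<^esub> z)"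
    using ab c by (simp add: AQ_mult m_assoc)
next
  fix x assume "x \<in> carrier (AQ G H)"
  then obtain a where ab: "a \<in> H" "x = KS #> a" by (auto simp: AQ_carrier)
  have c: "a \<in> carrier G" using ab subset by auto
  show "\<one>\<^bsub>AQ G H\<^esub> \<otimes>\<^bsub>AQ G H\<^esub> x = x"
    using ab c cos_one AQ_mult[of \<one> a] by (simp add: AQ_one)
  have "inv a \<in> H" using ab(1) by (rule m_inv_closed)
  moreover have "(KS #> inv a) \<otimes>\<^bsub>AQ G H\<^esub> x = \<one>\<^bsub>AQ G H\<^esub>"
    using ab c cos_one AQ_mult[of "inv a" a] by (simp add: AQ_one)
  ultimately show "\<exists>y\<in>carrier (AQ G H). y \<otimes>\<^bsub>AQ G H\<^esub> x = \<one>\<^bsub>AQ G H\<^esub>"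
    by (auto simp: AQ_carrier)
qed

lemma sN_mem: "g \<in> carrier G \<Longrightarrow> sN G (H #> g) \<in> H #> g"
  unfolding sN_def using rcos_self[OF _ subgroup_axioms] someI[of "\<lambda>r. r \<in> H #> g" g] by auto

lemma psi_mem: "g \<in> carrier G \<Longrightarrow> psi G H g \<in> H"
proof -
  assume g: "g \<in> carrier G"
  obtain h where h: "h \<in> H" "sN G (H #> g) = h \<otimes> g"
    using sN_mem[OF g] unfolding r_coset_def by blast
  have hc: "h \<in> carrier G" using h subset by blast
  have "psi G H g = inv h"
    unfolding psi_def h(2) using g hc by (simp add: inv_mult_group m_assoc[symmetric])
  then show ?thesis using h(1) m_inv_closed by simp
qed

lemma psi_H: "g \<in> H \<Longrightarrow> psi G H g = g"
proof -
  assume g: "g \<in> H"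
  have "H #> g = H" by (rule rcos_const[OF is_group g])
  then show ?thesis using g subset by (auto simp: psi_def sN_def)
qed

lemma psi_left: "a \<in> H \<Longrightarrow> b \<in> carrier G \<Longrightarrow> psi G H (a \<otimes> b) = a \<otimes> psi G H b"
proof -
  assume a: "a \<in> H" and b: "b \<in> carrier G"
  have ac: "a \<in> carrier G" using a subset by blast
  have "H #> (a \<otimes> b) = (H #> a) #> b" using coset_mult_assoc[OF subset ac b] by simp
  also have "\<dots> = H #> b" using rcos_const[OF is_group a] by simp
  finally have e: "H #> (a \<otimes> b) = H #> b" .
  have sc: "sN G (H #> b) \<in> carrier G" using sN_mem[OF b] r_coset_subset_G[OF subset b] by blast
  show ?thesis unfolding psi_def e using ac b sc by (simp add: m_assoc)
qed

lemma psi_right: "a \<in> carrier G \<Longrightarrow> b \<in> H \<Longrightarrow> psi G H (a \<otimes> b) = (a \<otimes> b \<otimes> inv a) \<otimes> psi G H a"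
proof -
  assume a: "a \<in> carrier G" and b: "b \<in> H"
  have bc: "b \<in> carrier G" using b subset by blast
  have cH: "a \<otimes> b \<otimes> inv a \<in> H" using inv_op_closed2[OF a b] .
  have cc: "a \<otimes> b \<otimes> inv a \<in> carrier G" using a bc by simp
  have "a \<otimes> b = (a \<otimes> b \<otimes> inv a) \<otimes> a" using a bc by (simp add: m_assoc)
  then have "H #> (a \<otimes> b) = (H #> (a \<otimes> b \<otimes> inv a)) #> a" using coset_mult_assoc[OF subset cc a] by simp
  also have "\<dots> = H #> a" using rcos_const[OF is_group cH] by simp
  finally have e: "H #> (a \<otimes> b) = H #> a" .
  have sc: "sN G (H #> a) \<in> carrier G" using sN_mem[OF a] r_coset_subset_G[OF subset a] by blast
  have k: "inv a \<otimes> (a \<otimes> inv sN G (H #> a)) = inv sN G (H #> a)"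
    using a sc by (simp add: m_assoc[symmetric])
  show ?thesis unfolding psi_def e using a bc sc k by (simp add: m_assoc)
qed

lemma psi_closed: "g \<in> carrier G \<Longrightarrow> psi G H g \<in> carrier G"
  using psi_mem subset by blast

lemma phi_closed: "phi G H \<in> UNIV \<rightarrow> carrier (AQ G H)"
proof
  fix g
  show "phi G H g \<in> carrier (AQ G H)"
  proof (cases "g \<in> carrier G")
    case True
    then show ?thesis using psi_mem[OF True] by (auto simp: phi_def AQ_carrier)
  next
    case False
    then show ?thesis using cos_one by (auto simp: phi_def AQ_carrier intro!: image_eqI[of _ _ \<one>])
  qed
qed

lemma phi_H: "g \<in> H \<Longrightarrow> phi G H g = KS #> g"
  using psi_H subset by (auto simp: phi_def)

lemma phi_mult:
  assumes a: "a \<in> carrier G" and b: "b \<in> carrier G" and ab: "a \<in> H \<or> b \<in> H"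
  shows "phi G H (a \<otimes> b) = phi G H a \<otimes>\<^bsub>AQ G H\<^esub> phi G H b"
  using ab
proof
  assume aH: "a \<in> H"
  have "phi G H (a \<otimes> b) = KS #> (a \<otimes> psi G H b)"
    using a b psi_left[OF aH b] by (simp add: phi_def)
  also have "\<dots> = (KS #> a) \<otimes>\<^bsub>AQ G H\<^esub> (KS #> psi G H b)"
    using AQ_mult a psi_closed[OF b] by simp
  finally show ?thesis using phi_H[OF aH] b by (simp add: phi_def)
next
  assume bH: "b \<in> H"
  have cc: "a \<otimes> b \<otimes> inv a \<in> carrier G" using a b by simp
  have "phi G H (a \<otimes> b) = KS #> ((a \<otimes> b \<otimes> inv a) \<otimes> psi G H a)"
    using a b psi_right[OF a bH] by (simp add: phi_def)
  also have "\<dots> = (KS #> (a \<otimes> b \<otimes> inv a)) \<otimes>\<^bsub>AQ G H\<^esub> (KS #> psi G H a)"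
    using AQ_mult cc psi_closed[OF a] by simp
  also have "\<dots> = phi G H b \<otimes>\<^bsub>AQ G H\<^esub> phi G H a"
    using cos_conj[OF a bH] phi_H[OF bH] a by (simp add: phi_def)
  also have "\<dots> = phi G H a \<otimes>\<^bsub>AQ G H\<^esub> phi G H b"
  proof -
    interpret A: comm_group "AQ G H" by (rule AQ_comm)
    show ?thesis using A.m_comm phi_closed by blast
  qed
  finally show ?thesis .
qed

end



context normal
begin

abbreviation "PS \<equiv> Psi (AQ G H) (phi G H)"

lemma PS_add: "finite (supp u) \<Longrightarrow> finite (supp v) \<Longrightarrow> PS (u + v) = PS u \<otimes>\<^bsub>AQ G H\<^esub> PS v"
  by (rule comm_group.Psi_add[OF AQ_comm phi_closed])

lemma PS_uminus: "finite (supp u) \<Longrightarrow> PS (- u) = inv\<^bsub>AQ G H\<^esub> (PS u)"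
  by (rule comm_group.Psi_uminus[OF AQ_comm phi_closed])

lemma PS_zero: "PS 0 = \<one>\<^bsub>AQ G H\<^esub>"
  by (rule comm_group.Psi_zero[OF AQ_comm])

lemma PS_basis1: "PS (basis1 g) = phi G H g"
  by (rule comm_group.Psi_basis1[OF AQ_comm phi_closed])

lemma PS_closed: "PS u \<in> carrier (AQ G H)"
  by (rule comm_group.Psi_closed[OF AQ_comm phi_closed])

lemma W_nat:
  assumes fin: "finite (supp u)" and one: "PS u = \<one>\<^bsub>AQ G H\<^esub>"
  shows "PS (\<lambda>x. int m * u x) = \<one>\<^bsub>AQ G H\<^esub>"
proof (induction m)
  case 0
  have "(\<lambda>x. int 0 * u x) = 0" by auto
  then show ?case using PS_zero by simp
next
  case (Suc m)
  interpret A: comm_group "AQ G H" by (rule AQ_comm)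
  have e: "(\<lambda>x. int (Suc m) * u x) = u + (\<lambda>x. int m * u x)" by (auto simp: algebra_simps)
  have f2: "finite (supp (\<lambda>x. int m * u x))"
    using fin by (rule finite_subset[rotated]) (auto simp: supp_def)
  show ?case unfolding e using PS_add[OF fin f2] Suc one by simp
qed

lemma W_smult:
  assumes fin: "finite (supp u)" and one: "PS u = \<one>\<^bsub>AQ G H\<^esub>"
  shows "finite (supp (\<lambda>x. n * u x)) \<and> PS (\<lambda>x. n * u x) = \<one>\<^bsub>AQ G H\<^esub>"
proof
  show "finite (supp (\<lambda>x. n * u x))"
    using fin by (rule finite_subset[rotated]) (auto simp: supp_def)
  interpret A: comm_group "AQ G H" by (rule AQ_comm)
  show "PS (\<lambda>x. n * u x) = \<one>\<^bsub>AQ G H\<^esub>"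
  proof (cases "n \<ge> 0")
    case True
    then have "n = int (nat n)" by simp
    then show ?thesis using W_nat[OF fin one, of "nat n"] by metis
  next
    case False
    then have nn: "n = - int (nat (- n))" by simp
    have e: "(\<lambda>x. n * u x) = - (\<lambda>x. int (nat (- n)) * u x)"
      by (subst nn) (auto)
    have f2: "finite (supp (\<lambda>x. int (nat (- n)) * u x))"
      using fin by (rule finite_subset[rotated]) (auto simp: supp_def)
    show ?thesis unfolding e PS_uminus[OF f2] W_nat[OF fin one] by (rule A.inv_one)
  qed
qed

lemma W_sum:
  assumes "finite S"
  shows "(\<forall>p\<in>S. finite (supp (F p)) \<and> PS (F p) = \<one>\<^bsub>AQ G H\<^esub>) \<Longrightarrow>
    finite (supp (sum F S)) \<and> PS (sum F S) = \<one>\<^bsub>AQ G H\<^esub>"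
  using assms
proof (induction S rule: finite_induct)
  case empty
  then show ?case using PS_zero by (metis sum.empty supp_zero finite.emptyI)
next
  case (insert x S)
  interpret A: comm_group "AQ G H" by (rule AQ_comm)
  have h: "finite (supp (F x))" "PS (F x) = \<one>\<^bsub>AQ G H\<^esub>" using insert.prems by auto
  have ih: "finite (supp (sum F S))" "PS (sum F S) = \<one>\<^bsub>AQ G H\<^esub>" using insert by auto
  have "sum F (insert x S) = F x + sum F S" using insert.hyps by simp
  moreover have "finite (supp (F x + sum F S))"
    using supp_add[of "F x" "sum F S"] h ih by (auto intro: finite_subset)
  moreover have "PS (F x + sum F S) = \<one>\<^bsub>AQ G H\<^esub>"
    using PS_add[OF h(1) ih(1)] h ih by simp
  ultimately show ?case by metis
qed

lemma (in comm_group) cancel3: "x \<in> carrier G \<Longrightarrow> y \<in> carrier G \<Longrightarrow> y \<otimes> inv (x \<otimes> y) \<otimes> x = \<one>"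
proof -
  assume x: "x \<in> carrier G" and y: "y \<in> carrier G"
  define z where "z = inv (x \<otimes> y)"
  have z: "z \<in> carrier G" using x y by (simp add: z_def)
  have "y \<otimes> z \<otimes> x = z \<otimes> y \<otimes> x" using m_comm[OF y z] by simp
  also have "\<dots> = z \<otimes> (x \<otimes> y)" using m_assoc[OF z y x] m_comm[OF y x] by simp
  also have "\<dots> = \<one>" using x y by (simp add: z_def)
  finally show ?thesis by (simp add: z_def)
qed

lemma fpair_W:
  assumes a: "a \<in> carrier G" and b: "b \<in> carrier G" and ab: "a \<in> H \<or> b \<in> H"
  shows "finite (supp (fpair G (a, b))) \<and> PS (fpair G (a, b)) = \<one>\<^bsub>AQ G H\<^esub>"
proof -
  interpret A: comm_group "AQ G H" by (rule AQ_comm)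
  have e: "fpair G (a, b) = (basis1 b + - basis1 (a \<otimes> b)) + basis1 a"
    by (simp add: fpair_def)
  have f1: "finite (supp (basis1 b))" "finite (supp (- basis1 (a \<otimes> b)))" "finite (supp (basis1 a))"
    by simp_all
  have f2: "finite (supp (basis1 b + - basis1 (a \<otimes> b)))"
    using supp_add[of "basis1 b" "- basis1 (a \<otimes> b)"] f1 by (meson finite_UnI finite_subset)
  have f3: "finite (supp (fpair G (a, b)))"
    unfolding e using supp_add[of "basis1 b + - basis1 (a \<otimes> b)" "basis1 a"] f1 f2 by (meson finite_UnI finite_subset)
  have pa: "phi G H a \<in> carrier (AQ G H)" and pb: "phi G H b \<in> carrier (AQ G H)"
    using phi_closed by auto
  have "PS (fpair G (a, b)) = PS (basis1 b + - basis1 (a \<otimes> b)) \<otimes>\<^bsub>AQ G H\<^esub> PS (basis1 a)"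
    unfolding e by (rule PS_add[OF f2 f1(3)])
  also have "PS (basis1 b + - basis1 (a \<otimes> b)) = PS (basis1 b) \<otimes>\<^bsub>AQ G H\<^esub> PS (- basis1 (a \<otimes> b))"
    by (rule PS_add[OF f1(1,2)])
  also have "PS (- basis1 (a \<otimes> b)) = inv\<^bsub>AQ G H\<^esub> (PS (basis1 (a \<otimes> b)))"
    by (rule PS_uminus) simp
  finally have "PS (fpair G (a, b)) = phi G H b \<otimes>\<^bsub>AQ G H\<^esub> inv\<^bsub>AQ G H\<^esub> (phi G H a \<otimes>\<^bsub>AQ G H\<^esub> phi G H b) \<otimes>\<^bsub>AQ G H\<^esub> phi G H a"
    unfolding PS_basis1 phi_mult[OF a b ab] .
  also have "\<dots> = \<one>\<^bsub>AQ G H\<^esub>" by (rule A.cancel3[OF pa pb])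
  finally show ?thesis using f3 by simp
qed

lemma PS_bdry:
  assumes d: "d \<in> rel_chains2 G H"
  shows "PS (bdry2 G d) = \<one>\<^bsub>AQ G H\<^esub>"
proof -
  have fin: "finite (supp d)" using d rel_chains2_finite by blast
  have e: "bdry2 G d = (\<Sum>p\<in>supp d. (\<lambda>x. d p * fpair G p x))"
  proof
    fix x
    show "bdry2 G d x = (\<Sum>p\<in>supp d. (\<lambda>x. d p * fpair G p x)) x"
      unfolding sum_fun_app by (rule bdry2_superset[OF fin order_refl])
  qed
  have "\<forall>p\<in>supp d. finite (supp (\<lambda>x. d p * fpair G p x)) \<and> PS (\<lambda>x. d p * fpair G p x) = \<one>\<^bsub>AQ G H\<^esub>"
  proof
    fix p assume p: "p \<in> supp d"
    obtain a b where pab: "p = (a, b)" by (cases p)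
    have "a \<in> carrier G" "b \<in> carrier G" "a \<in> H \<or> b \<in> H"
      using d p pab unfolding rel_chains2_def chains2_def by auto
    then have "finite (supp (fpair G p)) \<and> PS (fpair G p) = \<one>\<^bsub>AQ G H\<^esub>"
      unfolding pab by (rule fpair_W)
    then show "finite (supp (\<lambda>x. d p * fpair G p x)) \<and> PS (\<lambda>x. d p * fpair G p x) = \<one>\<^bsub>AQ G H\<^esub>"
      using W_smult by blast
  qed
  then show ?thesis unfolding e by (rule W_sum[OF fin, THEN conjunct2])
qed

lemma fin_lc: "finite (supp (list_chain xs))"
  using supp_lc by (rule finite_subset) simp

lemma PS_lc: "set xs \<subseteq> H \<Longrightarrow> PS (list_chain xs) = KS #> list_prod G xs"
proof (induction xs)
  case Nil
  then show ?case by (metis lc_Nil lp_Nil AQ_one PS_zero cos_one)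
next
  case (Cons x xs)
  have x: "x \<in> H" "x \<in> carrier G" and xs: "set xs \<subseteq> H" using Cons.prems subset by auto
  have p: "list_prod G xs \<in> carrier G" by (meson lp_closed order_trans subset xs)
  have "PS (list_chain (x # xs)) = PS (basis1 x) \<otimes>\<^bsub>AQ G H\<^esub> PS (list_chain xs)"
    unfolding lc_Cons by (rule PS_add[OF _ fin_lc]) simp
  also have "\<dots> = (KS #> x) \<otimes>\<^bsub>AQ G H\<^esub> (KS #> list_prod G xs)"
    using Cons.IH[OF xs] PS_basis1 phi_H[OF x(1)] by simp
  also have "\<dots> = KS #> list_prod G (x # xs)"
    using AQ_mult[OF x(2) p] by (simp add: lp_Cons)
  finally show ?case .
qed

lemma PS_nlc: "set ys \<subseteq> H \<Longrightarrow> PS (- list_chain ys) = KS #> list_prod G (map (\<lambda>y. inv y) ys)"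
proof (induction ys)
  case Nil
  then show ?case by (metis lc_Nil lp_Nil list.map(1) AQ_one PS_zero cos_one minus_zero)
next
  case (Cons y ys)
  interpret A: comm_group "AQ G H" by (rule AQ_comm)
  have y: "y \<in> H" "y \<in> carrier G" and ys: "set ys \<subseteq> H" using Cons.prems subset by auto
  have iyH: "inv y \<in> H" using y(1) by (rule m_inv_closed)
  have p: "list_prod G (map (\<lambda>y. inv y) ys) \<in> carrier G"
    using ys subset by (intro lp_closed) auto
  have e: "- list_chain (y # ys) = - basis1 y + - list_chain ys" by (simp add: lc_Cons)
  have "PS (- list_chain (y # ys)) = PS (- basis1 y) \<otimes>\<^bsub>AQ G H\<^esub> PS (- list_chain ys)"
    unfolding e by (rule PS_add) (simp_all add: fin_lc)
  also have "PS (- basis1 y) = KS #> inv y"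
  proof -
    have "PS (- basis1 y) = inv\<^bsub>AQ G H\<^esub> (KS #> y)"
      using PS_uminus[of "basis1 y"] PS_basis1 phi_H[OF y(1)] by simp
    also have "\<dots> = KS #> inv y"
    proof (rule A.inv_equality)
      show "(KS #> inv y) \<otimes>\<^bsub>AQ G H\<^esub> (KS #> y) = \<one>\<^bsub>AQ G H\<^esub>"
        using AQ_mult[of "inv y" y] y cos_one by (simp add: AQ_one)
      show "KS #> y \<in> carrier (AQ G H)" using y by (auto simp: AQ_carrier)
      show "KS #> inv y \<in> carrier (AQ G H)" using iyH by (auto simp: AQ_carrier)
    qed
    finally show ?thesis .
  qed
  also have "(KS #> inv y) \<otimes>\<^bsub>AQ G H\<^esub> PS (- list_chain ys) = KS #> list_prod G (map (\<lambda>y. inv y) (y # ys))"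
    unfolding Cons.IH[OF ys] list.map(2) lp_Cons by (rule AQ_mult[OF inv_closed[OF y(2)] p])
  finally show ?case .
qed

lemma ii_to_i:
  assumes c: "c \<in> calC G H"
  shows "\<exists>xs ys. set xs \<subseteq> H \<and> set ys \<subseteq> H \<and>
            c = (\<lambda>g. list_chain xs g - list_chain ys g) \<and>
            list_prod G xs \<otimes> list_prod G (map (\<lambda>y. inv y) ys) \<in> comm_subgroup G H"
proof -
  have c1: "finite (supp c)" "supp c \<subseteq> H" using c by (auto simp: calC_def chains1_def)
  obtain d where d: "d \<in> rel_chains2 G H" "c = bdry2 G d"
    using c by (auto simp: calC_def rel_bdries1_def)
  obtain xs ys where xy: "set xs \<subseteq> H" "set ys \<subseteq> H" "c = list_chain xs - list_chain ys"
    using decomp[OF c1] by blast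
  have P: "list_prod G xs \<in> carrier G" by (meson lp_closed order_trans subset xy(1))
  have Q: "list_prod G (map (\<lambda>y. inv y) ys) \<in> carrier G"
    using xy(2) subset by (intro lp_closed) auto
  have "PS c = \<one>\<^bsub>AQ G H\<^esub>" using PS_bdry d by simp
  moreover have "PS c = PS (list_chain xs) \<otimes>\<^bsub>AQ G H\<^esub> PS (- list_chain ys)"
    unfolding xy(3) diff_conv_add_uminus by (rule PS_add) (simp_all add: fin_lc)
  ultimately have "KS #> (list_prod G xs \<otimes> list_prod G (map (\<lambda>y. inv y) ys)) = KS"
    using PS_lc[OF xy(1)] PS_nlc[OF xy(2)] AQ_mult[OF P Q] by (simp add: AQ_one)
  then have "list_prod G xs \<otimes> list_prod G (map (\<lambda>y. inv y) ys) \<in> KS"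
    using rcos_self[OF m_closed[OF P Q] KS_subgroup] by simp
  moreover have "c = (\<lambda>g. list_chain xs g - list_chain ys g)" using xy(3) by auto
  ultimately show ?thesis using xy by blast
qed

lemma i_to_ii:
  assumes xs: "set xs \<subseteq> H" and ys: "set ys \<subseteq> H"
    and K: "list_prod G xs \<otimes> list_prod G (map (\<lambda>y. inv y) ys) \<in> comm_subgroup G H"
  shows "(\<lambda>g. list_chain xs g - list_chain ys g) \<in> calC G H"
proof -
  let ?c = "list_chain xs - list_chain ys"
  have ce: "(\<lambda>g. list_chain xs g - list_chain ys g) = ?c" by auto
  define zs where "zs = xs @ map (\<lambda>y. inv y) ys"
  have iys: "set (map (\<lambda>y. inv y) ys) \<subseteq> H" using ys m_inv_closed by auto
  have zs: "set zs \<subseteq> H" using xs iys by (auto simp: zs_def)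
  have pz: "list_prod G zs = list_prod G xs \<otimes> list_prod G (map (\<lambda>y. inv y) ys)"
    unfolding zs_def using xs iys subset by (intro lp_append) auto
  have b1: "list_chain zs - basis1 (list_prod G zs) \<in> rel_bdries1 G H" by (rule B_prod[OF zs])
  have b2: "basis1 (list_prod G zs) \<in> rel_bdries1 G H" using B_K K pz by simp
  have b3: "list_chain ys + list_chain (map (\<lambda>y. inv y) ys) \<in> rel_bdries1 G H" by (rule B_invs[OF ys])
  have eq: "?c = ((list_chain zs - basis1 (list_prod G zs)) + basis1 (list_prod G zs))
      - (list_chain ys + list_chain (map (\<lambda>y. inv y) ys))"
    by (simp add: zs_def lc_append algebra_simps)
  have "?c \<in> rel_bdries1 G H" by (subst eq) (rule B_diff[OF B_add[OF b1 b2] b3])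
  moreover have "?c \<in> chains1 H"
  proof -
    have "supp ?c \<subseteq> set xs \<union> set ys"
      by (auto simp: supp_def list_chain_def count_list_0_iff)
    then show ?thesis unfolding chains1_def using xs ys by (auto intro: finite_subset)
  qed
  ultimately show ?thesis unfolding ce calC_def by simp
qed

end

theorem lemma5p16:
  fixes G :: "('a, 'b) monoid_scheme" and N :: "'a set" and c :: "'a \<Rightarrow> int"
  assumes "group G" and "N \<lhd> G" and "c \<in> chains1 (carrier G)"
  shows "(\<exists>xs ys. set xs \<subseteq> N \<and> set ys \<subseteq> N \<and>
            c = (\<lambda>g. list_chain xs g - list_chain ys g) \<and>
            list_prod G xs \<otimes>\<^bsub>G\<^esub> list_prod G (map (\<lambda>y. inv\<^bsub>G\<^esub> y) ys) \<in> comm_subgroup G N)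
         \<longleftrightarrow> c \<in> calC G N"
proof -
  interpret normal N G by (rule assms(2))
  show ?thesis using i_to_ii ii_to_i by blast
qed

end
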